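(* Let $G$ and $H$ be nontrivial finite connected simple graphs and let $\ell\geq 2$ be an integer. (1) If $S$ is an $\{\ell\}$-resolving set of $G\Box H$, then the projection of $S$ onto $G$ is an $\{\ell\}$-resolving set of $G$ and the projection of $S$ onto $H$ is an $\{\ell\}$-resolving set of $H$. (2) If $S$ is an $\{\ell\}$-resolving set of $G$ and $S'$ is an $\ell$-solid-resolving set of $H$, then $S\times S'=\{ss': s\in S, s'\in S'\}$ is an $\{\ell\}$-resolving set of $G\Box H$; symmetrically, if $S$ is an $\{\ell\}$-resolving set of $H$ and $S'$ is an $\ell$-solid-resolving set of $G$, then $S'\times S$ is an $\{\ell\}$-resolving set of $G\Box H$. (3) $\max\{\beta_\ell(G),\beta_\ell(H)\}\leq\beta_\ell(G\Box H)\leq\min\{\beta_\ell(G)\cdot\beta_\ell^s(H),\ \beta_\ell^s(G)\cdot\beta_\ell(H)\}$.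
   Context: The Cartesian product $G\Box H$ has vertex set $\{av: a\in V(G), v\in V(H)\}$, with distinct $av,bu$ adjacent iff ($a=b$ and $uv\in E(H)$) or ($ab\in E(G)$ and $u=v$). The projection of $X\subseteq V(G\Box H)$ onto $G$ is $\{x_1: x_1x_2\in X\}$, and onto $H$ is $\{x_2: x_1x_2\in X\}$. For a graph, $d$ is the shortest-path distance, $d(s,X)=\min_{x\in X}d(s,x)$ for nonempty $X$, and $\mathcal{D}_S(X)=(d(s_1,X),\dots,d(s_k,X))$ for $S=\{s_1,\dots,s_k\}$. $S$ is an $\{\ell\}$-resolving set if $\mathcal{D}_S(X)\neq\mathcal{D}_S(Y)$ for all distinct nonempty vertex sets $X,Y$ with $|X|,|Y|\leq\ell$; $S$ is an $\ell$-solid-resolving set if $\mathcal{D}_S(X)\neq\mathcal{D}_S(Y)$ for all distinct nonempty vertex sets $X,Y$ with $|X|\leq\ell$ ($Y$ arbitrary). $\beta_\ell$ and $\beta_\ell^s$ are the minimum sizes of such sets. *)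

theory Defs
  imports Main
begin

definition simple_graph :: "'a set \<Rightarrow> ('a \<Rightarrow> 'a \<Rightarrow> bool) \<Rightarrow> bool" where
  "simple_graph V E \<longleftrightarrow> finite V \<and> (\<forall>x y. E x y \<longrightarrow> x \<in> V \<and> y \<in> V)
     \<and> (\<forall>x y. E x y \<longrightarrow> E y x) \<and> (\<forall>x. \<not> E x x)"

definition connected_graph :: "'a set \<Rightarrow> ('a \<Rightarrow> 'a \<Rightarrow> bool) \<Rightarrow> bool" where
  "connected_graph V E \<longleftrightarrow> (\<forall>u\<in>V. \<forall>v\<in>V. \<exists>n. (E ^^ n) u v)"

definition nontrivial_graph :: "'a set \<Rightarrow> bool" where
  "nontrivial_graph V \<longleftrightarrow> card V \<ge> 2"

definition gdist :: "('a \<Rightarrow> 'a \<Rightarrow> bool) \<Rightarrow> 'a \<Rightarrow> 'a \<Rightarrow> nat" where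
  "gdist E u v = (LEAST n. (E ^^ n) u v)"

definition setdist :: "('a \<Rightarrow> 'a \<Rightarrow> bool) \<Rightarrow> 'a \<Rightarrow> 'a set \<Rightarrow> nat" where
  "setdist E s X = Min (gdist E s ` X)"

text \<open>D_S(X) = D_S(Y) iff every s in S has the same distance to X and to Y.\<close>
definition l_resolving :: "'a set \<Rightarrow> ('a \<Rightarrow> 'a \<Rightarrow> bool) \<Rightarrow> nat \<Rightarrow> 'a set \<Rightarrow> bool" where
  "l_resolving V E l S \<longleftrightarrow> S \<subseteq> V \<and>
     (\<forall>X Y. X \<subseteq> V \<and> Y \<subseteq> V \<and> X \<noteq> {} \<and> Y \<noteq> {} \<and> card X \<le> l \<and> card Y \<le> l \<and> X \<noteq> Y
        \<longrightarrow> (\<exists>s\<in>S. setdist E s X \<noteq> setdist E s Y))"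

definition l_solid_resolving :: "'a set \<Rightarrow> ('a \<Rightarrow> 'a \<Rightarrow> bool) \<Rightarrow> nat \<Rightarrow> 'a set \<Rightarrow> bool" where
  "l_solid_resolving V E l S \<longleftrightarrow> S \<subseteq> V \<and>
     (\<forall>X Y. X \<subseteq> V \<and> Y \<subseteq> V \<and> X \<noteq> {} \<and> Y \<noteq> {} \<and> card X \<le> l \<and> X \<noteq> Y
        \<longrightarrow> (\<exists>s\<in>S. setdist E s X \<noteq> setdist E s Y))"

definition beta :: "'a set \<Rightarrow> ('a \<Rightarrow> 'a \<Rightarrow> bool) \<Rightarrow> nat \<Rightarrow> nat" where
  "beta V E l = (LEAST k. \<exists>S. l_resolving V E l S \<and> card S = k)"

definition beta_s :: "'a set \<Rightarrow> ('a \<Rightarrow> 'a \<Rightarrow> bool) \<Rightarrow> nat \<Rightarrow> nat" where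
  "beta_s V E l = (LEAST k. \<exists>S. l_solid_resolving V E l S \<and> card S = k)"

text \<open>Cartesian product G \<box> H; vertex ab is the pair (a, b).\<close>
definition cart_V :: "'a set \<Rightarrow> 'b set \<Rightarrow> ('a \<times> 'b) set" where
  "cart_V VG VH = VG \<times> VH"

definition cart_E :: "('a \<Rightarrow> 'a \<Rightarrow> bool) \<Rightarrow> ('b \<Rightarrow> 'b \<Rightarrow> bool) \<Rightarrow> 'a \<times> 'b \<Rightarrow> 'a \<times> 'b \<Rightarrow> bool" where
  "cart_E EG EH = (\<lambda>(a, u) (b, v). (a = b \<and> EH u v) \<or> (EG a b \<and> u = v))"

end

theory Submission
  imports Defs
begin

lemma cart_fst_walk: "(EG ^^ m) a b \<Longrightarrow> ((cart_E EG EH) ^^ m) (a, u) (b, u)"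
proof (induction m arbitrary: b)
  case 0 then show ?case by simp
next
  case (Suc m)
  then obtain c where c: "(EG ^^ m) a c" "EG c b" by (auto elim: relpowp_Suc_E)
  have "((cart_E EG EH) ^^ m) (a, u) (c, u)" using Suc.IH c(1) .
  moreover have "cart_E EG EH (c, u) (b, u)" using c(2) by (simp add: cart_E_def)
  ultimately show ?case by (rule relpowp_Suc_I)
qed

lemma cart_snd_walk: "(EH ^^ m) u v \<Longrightarrow> ((cart_E EG EH) ^^ m) (a, u) (a, v)"
proof (induction m arbitrary: v)
  case 0 then show ?case by simp
next
  case (Suc m)
  then obtain c where c: "(EH ^^ m) u c" "EH c v" by (auto elim: relpowp_Suc_E)
  have "((cart_E EG EH) ^^ m) (a, u) (a, c)" using Suc.IH c(1) .
  moreover have "cart_E EG EH (a, c) (a, v)" using c(2) by (simp add: cart_E_def)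
  ultimately show ?case by (rule relpowp_Suc_I)
qed

lemma cart_walk: "(EG ^^ m) a b \<Longrightarrow> (EH ^^ k) u v \<Longrightarrow> ((cart_E EG EH) ^^ (m + k)) (a, u) (b, v)"
  by (rule relpowp_trans[OF cart_fst_walk cart_snd_walk])

lemma cart_walk_split: "((cart_E EG EH) ^^ n) p q \<Longrightarrow>
   \<exists>m k. m + k = n \<and> (EG ^^ m) (fst p) (fst q) \<and> (EH ^^ k) (snd p) (snd q)"
proof (induction n arbitrary: q)
  case 0 then show ?case by auto
next
  case (Suc n)
  then obtain r where r: "((cart_E EG EH) ^^ n) p r" "cart_E EG EH r q" by (auto elim: relpowp_Suc_E)
  from Suc.IH[OF r(1)] obtain m k where mk: "m + k = n" "(EG ^^ m) (fst p) (fst r)" "(EH ^^ k) (snd p) (snd r)" by blast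
  from r(2) have "(fst r = fst q \<and> EH (snd r) (snd q)) \<or> (EG (fst r) (fst q) \<and> snd r = snd q)"
    by (cases r; cases q) (simp add: cart_E_def)
  then show ?case
  proof
    assume h: "fst r = fst q \<and> EH (snd r) (snd q)"
    have "(EH ^^ Suc k) (snd p) (snd q)" using mk(3) h by (blast intro: relpowp_Suc_I)
    then show ?thesis using mk h by (intro exI[of _ m] exI[of _ "Suc k"]) auto
  next
    assume h: "EG (fst r) (fst q) \<and> snd r = snd q"
    have "(EG ^^ Suc m) (fst p) (fst q)" using mk(2) h by (blast intro: relpowp_Suc_I)
    then show ?thesis using mk h by (intro exI[of _ "Suc m"] exI[of _ k]) auto
  qed
qed

lemma gdist_le: "(E ^^ n) u v \<Longrightarrow> gdist E u v \<le> n"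
  unfolding gdist_def by (rule Least_le)

lemma gdist_walk: "(E ^^ n) u v \<Longrightarrow> (E ^^ gdist E u v) u v"
  unfolding gdist_def by (rule LeastI)

lemma conn_walk: "connected_graph V E \<Longrightarrow> u \<in> V \<Longrightarrow> v \<in> V \<Longrightarrow> (E ^^ gdist E u v) u v"
proof -
  assume "connected_graph V E" "u \<in> V" "v \<in> V"
  then obtain n where "(E ^^ n) u v" unfolding connected_graph_def by blast
  then show ?thesis by (rule gdist_walk)
qed

lemma cart_gdist:
  assumes "connected_graph VG EG" "connected_graph VH EH" "a \<in> VG" "b \<in> VG" "u \<in> VH" "v \<in> VH"
  shows "gdist (cart_E EG EH) (a, u) (b, v) = gdist EG a b + gdist EH u v"
proof (rule antisym)
  have w: "((cart_E EG EH) ^^ (gdist EG a b + gdist EH u v)) (a, u) (b, v)"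
    using cart_walk[OF conn_walk[OF assms(1,3,4)] conn_walk[OF assms(2,5,6)]] .
  then show "gdist (cart_E EG EH) (a, u) (b, v) \<le> gdist EG a b + gdist EH u v" by (rule gdist_le)
  from cart_walk_split[OF gdist_walk[OF w]] obtain m k where
    "m + k = gdist (cart_E EG EH) (a, u) (b, v)" "(EG ^^ m) a b" "(EH ^^ k) u v" by auto
  then show "gdist EG a b + gdist EH u v \<le> gdist (cart_E EG EH) (a, u) (b, v)"
    using gdist_le by (metis add_le_mono)
qed

lemma gdist_zero_iff:
  assumes "connected_graph V E" "u \<in> V" "v \<in> V"
  shows "gdist E u v = 0 \<longleftrightarrow> u = v"
proof
  assume "gdist E u v = 0"
  then show "u = v" using conn_walk[OF assms] by simp
next
  assume "u = v"
  then show "gdist E u v = 0" unfolding gdist_def by (intro Least_eq_0) simp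
qed


lemma res_D: "l_resolving V E l S \<Longrightarrow> X \<subseteq> V \<Longrightarrow> Y \<subseteq> V \<Longrightarrow> X \<noteq> {} \<Longrightarrow> Y \<noteq> {} \<Longrightarrow> card X \<le> l \<Longrightarrow> card Y \<le> l \<Longrightarrow> X \<noteq> Y
  \<Longrightarrow> \<exists>s\<in>S. setdist E s X \<noteq> setdist E s Y"
  unfolding l_resolving_def by blast
lemma solid_D: "l_solid_resolving V E l S \<Longrightarrow> X \<subseteq> V \<Longrightarrow> Y \<subseteq> V \<Longrightarrow> X \<noteq> {} \<Longrightarrow> Y \<noteq> {} \<Longrightarrow> card X \<le> l \<Longrightarrow> X \<noteq> Y
  \<Longrightarrow> \<exists>s\<in>S. setdist E s X \<noteq> setdist E s Y"
  unfolding l_solid_resolving_def by blast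
lemma res_sub: "l_resolving V E l S \<Longrightarrow> S \<subseteq> V"
  unfolding l_resolving_def by blast
lemma solid_sub: "l_solid_resolving V E l S \<Longrightarrow> S \<subseteq> V"
  unfolding l_solid_resolving_def by blast

lemma sep_core:
  assumes "finite Z" "Z \<noteq> {}" "setdist E s Z \<noteq> setdist E s (insert b Z)"
  shows "\<forall>y\<in>Z. gdist E s b < gdist E s y"
proof -
  have "setdist E s (insert b Z) = min (gdist E s b) (setdist E s Z)"
    using assms(1,2) by (simp add: setdist_def Min_insert)
  then have "gdist E s b < setdist E s Z" using assms(3) by (auto simp: min_def split: if_splits)
  moreover have "\<forall>y\<in>Z. setdist E s Z \<le> gdist E s y" using assms(1) by (simp add: setdist_def)
  ultimately show ?thesis by (meson less_le_trans)
qed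

lemma solid_sep:
  assumes "l_solid_resolving V E l S" "b \<in> V" "Z \<subseteq> V" "card Z \<le> l" "b \<notin> Z" "finite V" "S \<noteq> {}"
  shows "\<exists>s\<in>S. \<forall>y\<in>Z. gdist E s b < gdist E s y"
proof (cases "Z = {}")
  case True then show ?thesis using assms(7) by auto
next
  case False
  have "finite Z" using assms(3,6) finite_subset by blast
  have "insert b Z \<noteq> Z" using assms(5) by auto
  have i1: "insert b Z \<subseteq> V" using assms(2,3) by simp
  have i2: "insert b Z \<noteq> {}" by simp
  obtain s where "s \<in> S" "setdist E s Z \<noteq> setdist E s (insert b Z)"
    using solid_D[OF assms(1) assms(3) i1 False i2 assms(4) \<open>insert b Z \<noteq> Z\<close>[symmetric]] by blast
  then show ?thesis using sep_core[OF \<open>finite Z\<close> False] by blast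
qed

lemma res_sep:
  assumes "l_resolving V E l S" "A \<subseteq> V" "a \<in> A" "card A \<le> l" "finite V" "S \<noteq> {}"
  shows "\<exists>s\<in>S. \<forall>x\<in>A-{a}. gdist E s a < gdist E s x"
proof (cases "A - {a} = {}")
  case True then show ?thesis using assms(6) by auto
next
  case False
  have fA: "finite A" using assms(2,5) finite_subset by blast
  then have "finite (A - {a})" by simp
  have ins: "insert a (A - {a}) = A" using assms(3) by auto
  have "card (A - {a}) \<le> l" using assms(4) fA by (meson card_Diff1_le le_trans)
  moreover have "A - {a} \<noteq> A" using assms(3) by auto
  moreover have "A - {a} \<subseteq> V" "A \<noteq> {}" using assms(2,3) by auto
  ultimately obtain s where "s \<in> S" "setdist E s (A - {a}) \<noteq> setdist E s A"
    using res_D[OF assms(1) _ assms(2) False _ _ assms(4)] by blast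
  then show ?thesis using sep_core[OF \<open>finite (A - {a})\<close> False, of E s a] ins by auto
qed

lemma res_nonempty:
  assumes "l_resolving V E l S" "card V \<ge> 2" "l \<ge> 1"
  shows "S \<noteq> {}"
proof -
  have "finite V" using assms(2) card.infinite by fastforce
  obtain u where u: "u \<in> V" using assms(2) by fastforce
  have "card (V - {u}) \<ge> 1" using assms(2) u \<open>finite V\<close> by simp
  then have "V - {u} \<noteq> {}" by (metis card.empty not_one_le_zero)
  then obtain v where v: "v \<in> V - {u}" by blast
  have "{u} \<noteq> {v}" using v by auto
  moreover have "{u} \<subseteq> V" "{v} \<subseteq> V" "card {u} \<le> l" "card {v} \<le> l" using u v assms(3) by auto
  ultimately obtain s where "s \<in> S" using res_D[OF assms(1)] by blast
  then show ?thesis by auto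
qed

lemma solid_imp_res: "l_solid_resolving V E l S \<Longrightarrow> l_resolving V E l S"
  unfolding l_solid_resolving_def l_resolving_def by blast

lemma min_strict:
  fixes f :: "'c \<Rightarrow> nat"
  assumes "finite X" "finite Y" "Y \<noteq> {}" "p \<in> X" "\<forall>q\<in>Y. f p < f q"
  shows "Min (f ` X) < Min (f ` Y)"
proof -
  have "Min (f ` X) \<le> f p" using assms(1,4) by simp
  moreover have "f p < Min (f ` Y)" using assms(2,3,5) by simp
  ultimately show ?thesis by simp
qed


definition pd :: "('a \<Rightarrow> 'a \<Rightarrow> bool) \<Rightarrow> ('b \<Rightarrow> 'b \<Rightarrow> bool) \<Rightarrow> 'a \<Rightarrow> 'b \<Rightarrow> ('a \<times> 'b) set \<Rightarrow> nat" where
  "pd EG EH s s' X = Min ((\<lambda>(x, y). gdist EG s x + gdist EH s' y) ` X)"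

lemma stepI:
  assumes SH: "l_solid_resolving VH EH l S'" "S' \<noteq> {}"
    and fin: "finite VG" "finite VH"
    and X: "X \<subseteq> VG \<times> VH" "X \<noteq> {}" and Y: "Y \<subseteq> VG \<times> VH" "Y \<noteq> {}" "card Y \<le> l"
    and lt: "setdist EG s (fst ` X) < setdist EG s (fst ` Y)"
  shows "\<exists>s'\<in>S'. pd EG EH s s' X < pd EG EH s s' Y"
proof -
  have fX: "finite X" and fY: "finite Y" using X Y fin finite_subset by (blast intro: finite_cartesian_product)+
  have "setdist EG s (fst ` X) \<in> gdist EG s ` fst ` X"
    unfolding setdist_def using fX X(2) by (intro Min_in) auto
  then obtain a b where ab: "(a, b) \<in> X" "gdist EG s a = setdist EG s (fst ` X)" by force
  have bV: "b \<in> VH" using ab X by auto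
  have "card (snd ` Y - {b}) \<le> l"
    using Y(3) fY by (meson card_Diff1_le card_image_le finite_imageI le_trans)
  moreover have "snd ` Y - {b} \<subseteq> VH" using Y by auto
  ultimately obtain s' where s': "s' \<in> S'" "\<forall>y\<in>snd ` Y - {b}. gdist EH s' b < gdist EH s' y"
    using solid_sep[OF SH(1) bV _ _ _ fin(2) SH(2)] by blast
  have "\<forall>q\<in>Y. (\<lambda>(x, y). gdist EG s x + gdist EH s' y) (a, b) < (\<lambda>(x, y). gdist EG s x + gdist EH s' y) q"
  proof
    fix q assume q: "q \<in> Y"
    obtain x y where xy: "q = (x, y)" by force
    have "setdist EG s (fst ` Y) \<le> gdist EG s x" using q xy fY unfolding setdist_def
      by (metis Min_le finite_imageI fst_conv image_eqI)
    then have "gdist EG s a < gdist EG s x" using ab lt by simp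
    moreover have "gdist EH s' b \<le> gdist EH s' y" using s'(2) q xy
      by (metis Diff_iff empty_iff insert_iff less_imp_le_nat order_refl snd_conv image_eqI)
    ultimately show "(\<lambda>(x, y). gdist EG s x + gdist EH s' y) (a, b) < (\<lambda>(x, y). gdist EG s x + gdist EH s' y) q"
      using xy by simp
  qed
  then have "pd EG EH s s' X < pd EG EH s s' Y"
    unfolding pd_def by (rule min_strict[OF fX fY Y(2) ab(1)])
  then show ?thesis using s' by blast
qed

lemma stepII:
  assumes SG: "l_resolving VG EG l S" "S \<noteq> {}"
    and SH: "l_solid_resolving VH EH l S'" "S' \<noteq> {}"
    and fin: "finite VG" "finite VH"
    and X: "X \<subseteq> VG \<times> VH" "card X \<le> l" and Y: "Y \<subseteq> VG \<times> VH" "Y \<noteq> {}" "card Y \<le> l"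
    and ab: "(a, b) \<in> X" "(a, b) \<notin> Y" and sub: "fst ` Y \<subseteq> fst ` X"
  shows "\<exists>s\<in>S. \<exists>s'\<in>S'. pd EG EH s s' X < pd EG EH s s' Y"
proof -
  have fX: "finite X" and fY: "finite Y" using X Y fin finite_subset by (blast intro: finite_cartesian_product)+
  have bV: "b \<in> VH" using ab X by auto
  have "card (fst ` X) \<le> l" using X(2) fX by (meson card_image_le le_trans)
  moreover have "fst ` X \<subseteq> VG" using X by auto
  moreover have "a \<in> fst ` X" using ab by force
  ultimately obtain s where s: "s \<in> S" "\<forall>x\<in>fst ` X - {a}. gdist EG s a < gdist EG s x"
    using res_sep[OF SG(1) _ _ _ fin(1) SG(2)] by blast
  have "card (snd ` Y - {b}) \<le> l"
    using Y(3) fY by (meson card_Diff1_le card_image_le finite_imageI le_trans)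
  moreover have "snd ` Y - {b} \<subseteq> VH" using Y by auto
  ultimately obtain s' where s': "s' \<in> S'" "\<forall>y\<in>snd ` Y - {b}. gdist EH s' b < gdist EH s' y"
    using solid_sep[OF SH(1) bV _ _ _ fin(2) SH(2)] by blast
  have "\<forall>q\<in>Y. (\<lambda>(x, y). gdist EG s x + gdist EH s' y) (a, b) < (\<lambda>(x, y). gdist EG s x + gdist EH s' y) q"
  proof
    fix q assume q: "q \<in> Y"
    obtain x y where xy: "q = (x, y)" by force
    have xA: "x \<in> fst ` X" using sub q xy by force
    have hle: "gdist EH s' b \<le> gdist EH s' y" using s'(2) q xy
      by (metis Diff_iff empty_iff insert_iff less_imp_le_nat order_refl snd_conv image_eqI)
    show "(\<lambda>(x, y). gdist EG s x + gdist EH s' y) (a, b) < (\<lambda>(x, y). gdist EG s x + gdist EH s' y) q"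
    proof (cases "x = a")
      case True
      then have "y \<noteq> b" using ab q xy by auto
      then have "gdist EH s' b < gdist EH s' y" using s'(2) q xy by force
      then show ?thesis using xy True by simp
    next
      case False
      then have "gdist EG s a < gdist EG s x" using s(2) xA by blast
      then show ?thesis using xy hle by simp
    qed
  qed
  then have "pd EG EH s s' X < pd EG EH s s' Y"
    unfolding pd_def by (rule min_strict[OF fX fY Y(2) ab(1)])
  then show ?thesis using s s' by blast
qed

lemma prod_core:
  assumes SG: "l_resolving VG EG l S" "S \<noteq> {}"
    and SH: "l_solid_resolving VH EH l S'" "S' \<noteq> {}"
    and fin: "finite VG" "finite VH"
    and X: "X \<subseteq> VG \<times> VH" "X \<noteq> {}" "card X \<le> l"
    and Y: "Y \<subseteq> VG \<times> VH" "Y \<noteq> {}" "card Y \<le> l" and ne: "X \<noteq> Y"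
  shows "\<exists>s\<in>S. \<exists>s'\<in>S'. pd EG EH s s' X \<noteq> pd EG EH s s' Y"
proof (cases "fst ` X = fst ` Y")
  case False
  have fX: "finite X" and fY: "finite Y" using X Y fin finite_subset by (blast intro: finite_cartesian_product)+
  have "card (fst ` X) \<le> l" using X(3) fX by (meson card_image_le le_trans)
  moreover have "card (fst ` Y) \<le> l" using Y(3) fY by (meson card_image_le le_trans)
  moreover have "fst ` X \<subseteq> VG" "fst ` Y \<subseteq> VG" using X Y by auto
  ultimately obtain s where s: "s \<in> S" "setdist EG s (fst ` X) \<noteq> setdist EG s (fst ` Y)"
    using SG(1) False X(2) Y(2) unfolding l_resolving_def by (metis image_is_empty)
  show ?thesis
  proof (cases "setdist EG s (fst ` X) < setdist EG s (fst ` Y)")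
    case True
    then show ?thesis using stepI[OF SH fin X(1,2) Y] s(1) by (metis less_irrefl)
  next
    case False
    then have "setdist EG s (fst ` Y) < setdist EG s (fst ` X)" using s(2) by simp
    then show ?thesis using stepI[OF SH fin Y(1,2) X] s(1) by (metis less_irrefl)
  qed
next
  case True
  show ?thesis
  proof (cases "X \<subseteq> Y")
    case False
    then obtain a b where ab: "(a, b) \<in> X" "(a, b) \<notin> Y" by auto
    then show ?thesis using stepII[OF SG SH fin X(1,3) Y ab] True by (metis less_irrefl order_refl)
  next
    case sub: True
    then obtain a b where ab: "(a, b) \<in> Y" "(a, b) \<notin> X" using ne by auto
    then show ?thesis using stepII[OF SG SH fin Y(1,3) X ab] True by (metis less_irrefl order_refl)
  qed
qed


lemma setdist_cart:
  assumes "connected_graph VG EG" "connected_graph VH EH" "s \<in> VG" "s' \<in> VH" "X \<subseteq> VG \<times> VH"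
  shows "setdist (cart_E EG EH) (s, s') X = pd EG EH s s' X"
  unfolding setdist_def pd_def
proof (intro arg_cong[where f=Min] image_cong refl)
  fix p assume "p \<in> X"
  then obtain x y where "p = (x, y)" "x \<in> VG" "y \<in> VH" using assms(5) by auto
  then show "gdist (cart_E EG EH) (s, s') p = (case p of (x, y) \<Rightarrow> gdist EG s x + gdist EH s' y)"
    using cart_gdist[OF assms(1,2,3) _ assms(4)] by simp
qed

lemma min_plus:
  fixes f :: "'c \<Rightarrow> nat"
  assumes "finite A" "A \<noteq> {}"
  shows "Min ((\<lambda>x. f x + c) ` A) = Min (f ` A) + c"
proof -
  have "mono (\<lambda>n::nat. n + c)" by (simp add: mono_def)
  from mono_Min_commute[OF this, of "f ` A"] assms show ?thesis by (simp add: image_image)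
qed

lemma setdist_fiber1:
  assumes "connected_graph VG EG" "connected_graph VH EH" "s1 \<in> VG" "s2 \<in> VH" "v \<in> VH"
    "X \<subseteq> VG" "finite X" "X \<noteq> {}"
  shows "setdist (cart_E EG EH) (s1, s2) (X \<times> {v}) = setdist EG s1 X + gdist EH s2 v"
proof -
  have "(\<lambda>(x, y). gdist EG s1 x + gdist EH s2 y) ` (X \<times> {v}) = (\<lambda>x. gdist EG s1 x + gdist EH s2 v) ` X"
    by force
  then show ?thesis using setdist_cart[OF assms(1-4), of "X \<times> {v}"] assms(5-8) min_plus[OF assms(7,8)]
    by (simp add: pd_def setdist_def subset_iff)
qed

lemma setdist_fiber2:
  assumes "connected_graph VG EG" "connected_graph VH EH" "s1 \<in> VG" "s2 \<in> VH" "u \<in> VG"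
    "X \<subseteq> VH" "finite X" "X \<noteq> {}"
  shows "setdist (cart_E EG EH) (s1, s2) ({u} \<times> X) = setdist EH s2 X + gdist EG s1 u"
proof -
  have "(\<lambda>(x, y). gdist EG s1 x + gdist EH s2 y) ` ({u} \<times> X) = (\<lambda>x. gdist EH s2 x + gdist EG s1 u) ` X"
    by force
  then show ?thesis using setdist_cart[OF assms(1-4), of "{u} \<times> X"] assms(5-8) min_plus[OF assms(7,8)]
    by (simp add: pd_def setdist_def subset_iff)
qed

lemma part1_fst:
  assumes cG: "connected_graph VG EG" and cH: "connected_graph VH EH" and fG: "finite VG"
    and v: "v \<in> VH" and S: "l_resolving (cart_V VG VH) (cart_E EG EH) l S"
  shows "l_resolving VG EG l (fst ` S)"
  unfolding l_resolving_def
proof (intro conjI allI impI)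
  show "fst ` S \<subseteq> VG" using S unfolding l_resolving_def cart_V_def by auto
  fix X Y assume h: "X \<subseteq> VG \<and> Y \<subseteq> VG \<and> X \<noteq> {} \<and> Y \<noteq> {} \<and> card X \<le> l \<and> card Y \<le> l \<and> X \<noteq> Y"
  have fX: "finite X" "finite Y" using h fG finite_subset by auto
  have "X \<times> {v} \<noteq> Y \<times> {v}" using h by auto
  moreover have "card (X \<times> {v}) \<le> l" "card (Y \<times> {v}) \<le> l" using h by (simp_all add: card_cartesian_product)
  moreover have "X \<times> {v} \<subseteq> cart_V VG VH" "Y \<times> {v} \<subseteq> cart_V VG VH" using h v by (auto simp: cart_V_def)
  ultimately obtain s where s: "s \<in> S"
    "setdist (cart_E EG EH) s (X \<times> {v}) \<noteq> setdist (cart_E EG EH) s (Y \<times> {v})"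
    using S h unfolding l_resolving_def by (metis Sigma_empty1 insert_not_empty times_eq_iff)
  obtain s1 s2 where s12: "s = (s1, s2)" by force
  have "s1 \<in> VG" "s2 \<in> VH" using S s(1) s12 unfolding l_resolving_def cart_V_def by auto
  then have "setdist EG s1 X \<noteq> setdist EG s1 Y"
    using s(2) s12 setdist_fiber1[OF cG cH _ _ v] h fX by auto
  moreover have "s1 \<in> fst ` S" using s(1) s12 by force
  ultimately show "\<exists>s\<in>fst ` S. setdist EG s X \<noteq> setdist EG s Y" by blast
qed

lemma part1_snd:
  assumes cG: "connected_graph VG EG" and cH: "connected_graph VH EH" and fH: "finite VH"
    and u: "u \<in> VG" and S: "l_resolving (cart_V VG VH) (cart_E EG EH) l S"
  shows "l_resolving VH EH l (snd ` S)"
  unfolding l_resolving_def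
proof (intro conjI allI impI)
  show "snd ` S \<subseteq> VH" using S unfolding l_resolving_def cart_V_def by auto
  fix X Y assume h: "X \<subseteq> VH \<and> Y \<subseteq> VH \<and> X \<noteq> {} \<and> Y \<noteq> {} \<and> card X \<le> l \<and> card Y \<le> l \<and> X \<noteq> Y"
  have fX: "finite X" "finite Y" using h fH finite_subset by auto
  have "{u} \<times> X \<noteq> {u} \<times> Y" using h by auto
  moreover have "card ({u} \<times> X) \<le> l" "card ({u} \<times> Y) \<le> l" using h by (simp_all add: card_cartesian_product)
  moreover have "{u} \<times> X \<subseteq> cart_V VG VH" "{u} \<times> Y \<subseteq> cart_V VG VH" using h u by (auto simp: cart_V_def)
  ultimately obtain s where s: "s \<in> S"
    "setdist (cart_E EG EH) s ({u} \<times> X) \<noteq> setdist (cart_E EG EH) s ({u} \<times> Y)"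
    using S h unfolding l_resolving_def by (metis Sigma_empty2 insert_not_empty times_eq_iff)
  obtain s1 s2 where s12: "s = (s1, s2)" by force
  have "s1 \<in> VG" "s2 \<in> VH" using S s(1) s12 unfolding l_resolving_def cart_V_def by auto
  then have "setdist EH s2 X \<noteq> setdist EH s2 Y"
    using s(2) s12 setdist_fiber2[OF cG cH _ _ u] h fX by auto
  moreover have "s2 \<in> snd ` S" using s(1) s12 by force
  ultimately show "\<exists>s\<in>snd ` S. setdist EH s X \<noteq> setdist EH s Y" by blast
qed


lemma part2:
  assumes cG: "connected_graph VG EG" and cH: "connected_graph VH EH"
    and fG: "finite VG" and fH: "finite VH" and nG: "card VG \<ge> 2" and nH: "card VH \<ge> 2" and l: "l \<ge> 1"
    and S: "l_resolving VG EG l S" and S': "l_solid_resolving VH EH l S'"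
  shows "l_resolving (cart_V VG VH) (cart_E EG EH) l (S \<times> S')"
  unfolding l_resolving_def
proof (intro conjI allI impI)
  have SV: "S \<subseteq> VG" "S' \<subseteq> VH" using S S' unfolding l_resolving_def l_solid_resolving_def by auto
  then show "S \<times> S' \<subseteq> cart_V VG VH" by (auto simp: cart_V_def)
  have neS: "S \<noteq> {}" using res_nonempty[OF S nG l] .
  have neS': "S' \<noteq> {}" using res_nonempty[OF solid_imp_res[OF S'] nH l] .
  fix X Y assume h: "X \<subseteq> cart_V VG VH \<and> Y \<subseteq> cart_V VG VH \<and> X \<noteq> {} \<and> Y \<noteq> {} \<and> card X \<le> l \<and> card Y \<le> l \<and> X \<noteq> Y"
  then have XY: "X \<subseteq> VG \<times> VH" "X \<noteq> {}" "card X \<le> l" "Y \<subseteq> VG \<times> VH" "Y \<noteq> {}" "card Y \<le> l" "X \<noteq> Y"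
    by (simp_all add: cart_V_def)
  obtain s s' where ss: "s \<in> S" "s' \<in> S'" "pd EG EH s s' X \<noteq> pd EG EH s s' Y"
    using prod_core[OF S neS S' neS' fG fH XY] by blast
  have "s \<in> VG" "s' \<in> VH" using SV ss by auto
  then have "setdist (cart_E EG EH) (s, s') X = pd EG EH s s' X" "setdist (cart_E EG EH) (s, s') Y = pd EG EH s s' Y"
    using setdist_cart[OF cG cH] XY by blast+
  then have "setdist (cart_E EG EH) (s, s') X \<noteq> setdist (cart_E EG EH) (s, s') Y"
    using ss(3) by simp
  then show "\<exists>p\<in>S \<times> S'. setdist (cart_E EG EH) p X \<noteq> setdist (cart_E EG EH) p Y"
    using ss by blast
qed

lemma pd_swap: "pd EH EG s s' (prod.swap ` X) = pd EG EH s' s X"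
  unfolding pd_def image_image
  by (intro arg_cong[where f=Min] image_cong) (auto simp: add.commute)

lemma part2_swap:
  assumes cG: "connected_graph VG EG" and cH: "connected_graph VH EH"
    and fG: "finite VG" and fH: "finite VH" and nG: "card VG \<ge> 2" and nH: "card VH \<ge> 2" and l: "l \<ge> 1"
    and S: "l_resolving VH EH l S" and S': "l_solid_resolving VG EG l S'"
  shows "l_resolving (cart_V VG VH) (cart_E EG EH) l (S' \<times> S)"
  unfolding l_resolving_def
proof (intro conjI allI impI)
  have SV: "S \<subseteq> VH" "S' \<subseteq> VG" using S S' unfolding l_resolving_def l_solid_resolving_def by auto
  then show "S' \<times> S \<subseteq> cart_V VG VH" by (auto simp: cart_V_def)
  have neS: "S \<noteq> {}" using res_nonempty[OF S nH l] .
  have neS': "S' \<noteq> {}" using res_nonempty[OF solid_imp_res[OF S'] nG l] .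
  fix X Y assume h: "X \<subseteq> cart_V VG VH \<and> Y \<subseteq> cart_V VG VH \<and> X \<noteq> {} \<and> Y \<noteq> {} \<and> card X \<le> l \<and> card Y \<le> l \<and> X \<noteq> Y"
  have inj: "inj_on prod.swap A" for A :: "('a \<times> 'b) set" by (metis inj_swap inj_on_subset subset_UNIV)
  have "prod.swap ` X \<subseteq> VH \<times> VG" "prod.swap ` Y \<subseteq> VH \<times> VG" using h by (auto simp: cart_V_def)
  moreover have "prod.swap ` X \<noteq> {}" "prod.swap ` Y \<noteq> {}" using h by auto
  moreover have "card (prod.swap ` X) \<le> l" "card (prod.swap ` Y) \<le> l"
    using h by (simp_all add: card_image[OF inj])
  moreover have "prod.swap ` X \<noteq> prod.swap ` Y" using h by (metis image_inv_f_f inj_swap)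
  ultimately obtain s s' where ss: "s \<in> S" "s' \<in> S'"
    "pd EH EG s s' (prod.swap ` X) \<noteq> pd EH EG s s' (prod.swap ` Y)"
    using prod_core[OF S neS S' neS' fH fG] by blast
  then have pdne: "pd EG EH s' s X \<noteq> pd EG EH s' s Y" by (simp add: pd_swap)
  have "s' \<in> VG" "s \<in> VH" using SV ss by auto
  moreover have "X \<subseteq> VG \<times> VH" "Y \<subseteq> VG \<times> VH" using h by (simp_all add: cart_V_def)
  ultimately have "setdist (cart_E EG EH) (s', s) X = pd EG EH s' s X" "setdist (cart_E EG EH) (s', s) Y = pd EG EH s' s Y"
    using setdist_cart[OF cG cH] by blast+
  with pdne have "setdist (cart_E EG EH) (s', s) X \<noteq> setdist (cart_E EG EH) (s', s) Y" by simp
  then show "\<exists>p\<in>S' \<times> S. setdist (cart_E EG EH) p X \<noteq> setdist (cart_E EG EH) p Y"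
    using ss by blast
qed

lemma sep0:
  assumes "finite Y" "Y \<noteq> {}" "w \<in> X" "finite X" "w \<notin> Y" "X \<subseteq> V" "Y \<subseteq> V" "w \<in> V"
    and z: "\<forall>u\<in>V. \<forall>v\<in>V. gdist E u v = 0 \<longleftrightarrow> u = v"
  shows "setdist E w X \<noteq> setdist E w Y"
proof -
  have "setdist E w X \<le> gdist E w w" unfolding setdist_def using assms(3,4) by simp
  moreover have "gdist E w w = 0" using z assms(8) by blast
  ultimately have "setdist E w X = 0" by simp
  moreover have "0 < setdist E w Y" unfolding setdist_def using assms z
    by (auto simp: Min_gr_iff)
  ultimately show ?thesis by simp
qed

lemma V_solid:
  assumes "finite V" and z: "\<forall>u\<in>V. \<forall>v\<in>V. gdist E u v = 0 \<longleftrightarrow> u = v"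
  shows "l_solid_resolving V E l V"
  unfolding l_solid_resolving_def
proof (intro conjI allI impI)
  show "V \<subseteq> V" by simp
  fix X Y assume h: "X \<subseteq> V \<and> Y \<subseteq> V \<and> X \<noteq> {} \<and> Y \<noteq> {} \<and> card X \<le> l \<and> X \<noteq> Y"
  have f: "finite X" "finite Y" using h assms(1) finite_subset by auto
  show "\<exists>s\<in>V. setdist E s X \<noteq> setdist E s Y"
  proof (cases "X \<subseteq> Y")
    case False
    then obtain w where "w \<in> X" "w \<notin> Y" by auto
    then show ?thesis using sep0[OF f(2) _ _ f(1) _ _ _ _ z] h by blast
  next
    case True
    then obtain w where "w \<in> Y" "w \<notin> X" using h by auto
    then show ?thesis using sep0[OF f(1) _ _ f(2) _ _ _ _ z] h by (metis subsetD)
  qed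
qed

lemma beta_witness:
  assumes "l_resolving V E l T"
  shows "\<exists>S. l_resolving V E l S \<and> card S = beta V E l"
proof -
  have "\<exists>S. l_resolving V E l S \<and> card S = card T" using assms by blast
  then show ?thesis unfolding beta_def by (rule LeastI)
qed

lemma beta_le:
  assumes "l_resolving V E l S"
  shows "beta V E l \<le> card S"
proof -
  have "\<exists>S'. l_resolving V E l S' \<and> card S' = card S" using assms by blast
  then show ?thesis unfolding beta_def by (rule Least_le)
qed

lemma beta_s_witness:
  assumes "l_solid_resolving V E l T"
  shows "\<exists>S. l_solid_resolving V E l S \<and> card S = beta_s V E l"
proof -
  have "\<exists>S. l_solid_resolving V E l S \<and> card S = card T" using assms by blast
  then show ?thesis unfolding beta_s_def by (rule LeastI)
qed

lemma zero_prod: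
  assumes cG: "connected_graph VG EG" and cH: "connected_graph VH EH"
  shows "\<forall>u\<in>cart_V VG VH. \<forall>v\<in>cart_V VG VH. gdist (cart_E EG EH) u v = 0 \<longleftrightarrow> u = v"
proof (intro ballI)
  fix u v assume "u \<in> cart_V VG VH" "v \<in> cart_V VG VH"
  then obtain a b x y where "u = (a, x)" "v = (b, y)" "a \<in> VG" "b \<in> VG" "x \<in> VH" "y \<in> VH"
    by (auto simp: cart_V_def)
  then show "gdist (cart_E EG EH) u v = 0 \<longleftrightarrow> u = v"
    using cart_gdist[OF cG cH] gdist_zero_iff[OF cG] gdist_zero_iff[OF cH] by auto
qed

theorem mainTheorem9:
  fixes VG :: "'a set" and EG :: "'a \<Rightarrow> 'a \<Rightarrow> bool"
    and VH :: "'b set" and EH :: "'b \<Rightarrow> 'b \<Rightarrow> bool"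
    and l :: nat
  assumes G: "simple_graph VG EG" "connected_graph VG EG" "nontrivial_graph VG"
    and H: "simple_graph VH EH" "connected_graph VH EH" "nontrivial_graph VH"
    and l: "l \<ge> 2"
  shows "(\<forall>S. l_resolving (cart_V VG VH) (cart_E EG EH) l S \<longrightarrow>
            l_resolving VG EG l (fst ` S) \<and> l_resolving VH EH l (snd ` S))
       \<and> (\<forall>S S'. l_resolving VG EG l S \<and> l_solid_resolving VH EH l S' \<longrightarrow>
            l_resolving (cart_V VG VH) (cart_E EG EH) l (S \<times> S'))
       \<and> (\<forall>S S'. l_resolving VH EH l S \<and> l_solid_resolving VG EG l S' \<longrightarrow>
            l_resolving (cart_V VG VH) (cart_E EG EH) l (S' \<times> S))
       \<and> max (beta VG EG l) (beta VH EH l) \<le> beta (cart_V VG VH) (cart_E EG EH) l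
       \<and> beta (cart_V VG VH) (cart_E EG EH) l
           \<le> min (beta VG EG l * beta_s VH EH l) (beta_s VG EG l * beta VH EH l)"
proof -
  have fG: "finite VG" using G(1) unfolding simple_graph_def by blast
  have fH: "finite VH" using H(1) unfolding simple_graph_def by blast
  have nG: "card VG \<ge> 2" using G(3) unfolding nontrivial_graph_def .
  have nH: "card VH \<ge> 2" using H(3) unfolding nontrivial_graph_def .
  have "VG \<noteq> {}" using nG by (cases "VG = {}") auto
  then obtain u where u: "u \<in> VG" by blast
  have "VH \<noteq> {}" using nH by (cases "VH = {}") auto
  then obtain v where v: "v \<in> VH" by blast
  have l1: "l \<ge> 1" using l by simp
  have P1: "\<forall>S. l_resolving (cart_V VG VH) (cart_E EG EH) l S \<longrightarrow>
            l_resolving VG EG l (fst ` S) \<and> l_resolving VH EH l (snd ` S)"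
    using part1_fst[OF G(2) H(2) fG v] part1_snd[OF G(2) H(2) fH u] by blast
  have P2: "\<forall>S S'. l_resolving VG EG l S \<and> l_solid_resolving VH EH l S' \<longrightarrow>
            l_resolving (cart_V VG VH) (cart_E EG EH) l (S \<times> S')"
    using part2[OF G(2) H(2) fG fH nG nH l1] by blast
  have P3: "\<forall>S S'. l_resolving VH EH l S \<and> l_solid_resolving VG EG l S' \<longrightarrow>
            l_resolving (cart_V VG VH) (cart_E EG EH) l (S' \<times> S)"
    using part2_swap[OF G(2) H(2) fG fH nG nH l1] by blast
  have fP: "finite (cart_V VG VH)" using fG fH by (simp add: cart_V_def)
  have zG: "\<forall>x\<in>VG. \<forall>y\<in>VG. gdist EG x y = 0 \<longleftrightarrow> x = y" using gdist_zero_iff[OF G(2)] by simp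
  have zH: "\<forall>x\<in>VH. \<forall>y\<in>VH. gdist EH x y = 0 \<longleftrightarrow> x = y" using gdist_zero_iff[OF H(2)] by simp
  have VP: "l_resolving (cart_V VG VH) (cart_E EG EH) l (cart_V VG VH)"
    using solid_imp_res[OF V_solid[OF fP zero_prod[OF G(2) H(2)]]] .
  obtain S0 where S0: "l_resolving (cart_V VG VH) (cart_E EG EH) l S0"
    "card S0 = beta (cart_V VG VH) (cart_E EG EH) l" using beta_witness[OF VP] by blast
  have "S0 \<subseteq> cart_V VG VH" using S0(1) unfolding l_resolving_def by blast
  then have fS0: "finite S0" using fP by (rule finite_subset)
  have "beta VG EG l \<le> card (fst ` S0)" by (rule beta_le[OF P1[rule_format, OF S0(1), THEN conjunct1]])
  also have "\<dots> \<le> card S0" using fS0 by (rule card_image_le)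
  finally have L1: "beta VG EG l \<le> beta (cart_V VG VH) (cart_E EG EH) l" using S0(2) by simp
  have "beta VH EH l \<le> card (snd ` S0)" by (rule beta_le[OF P1[rule_format, OF S0(1), THEN conjunct2]])
  also have "\<dots> \<le> card S0" using fS0 by (rule card_image_le)
  finally have L2: "beta VH EH l \<le> beta (cart_V VG VH) (cart_E EG EH) l" using S0(2) by simp
  obtain S1 where S1: "l_resolving VG EG l S1" "card S1 = beta VG EG l"
    using beta_witness[OF solid_imp_res[OF V_solid[OF fG zG]]] by blast
  obtain S2 where S2: "l_solid_resolving VH EH l S2" "card S2 = beta_s VH EH l"
    using beta_s_witness[OF V_solid[OF fH zH]] by blast
  obtain T1 where T1: "l_resolving VH EH l T1" "card T1 = beta VH EH l"
    using beta_witness[OF solid_imp_res[OF V_solid[OF fH zH]]] by blast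
  obtain T2 where T2: "l_solid_resolving VG EG l T2" "card T2 = beta_s VG EG l"
    using beta_s_witness[OF V_solid[OF fG zG]] by blast
  have U1: "beta (cart_V VG VH) (cart_E EG EH) l \<le> beta VG EG l * beta_s VH EH l"
    using beta_le[OF P2[rule_format, OF conjI[OF S1(1) S2(1)]]] S1(2) S2(2)
    by (simp add: card_cartesian_product)
  have U2: "beta (cart_V VG VH) (cart_E EG EH) l \<le> beta_s VG EG l * beta VH EH l"
    using beta_le[OF P3[rule_format, OF conjI[OF T1(1) T2(1)]]] T1(2) T2(2)
    by (simp add: card_cartesian_product)
  show ?thesis by (intro conjI P1 P2 P3 max.boundedI min.boundedI L1 L2 U1 U2)
qed

end
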